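(* Let $K_4$ be the complete graph on $4$ vertices. Then $K_4\notin\mathfrak{F}$, but $K_4\in\mathcal{P}$.
   Context: Graphs are finite, simple and undirected. $\mathbb{T}=\{z\in\mathbb{C}:|z|=1\}$, $\mathbb{I}=[0,2\pi)$. A $\mathbb{T}$-gain on $G$ is a map $\varphi$ from oriented edges to $\mathbb{T}$ with $\varphi(\overrightarrow{e_{ts}})=\varphi(\overrightarrow{e_{st}})^{-1}$; $A(\Phi)$ for $\Phi=(G,\varphi)$ is the Hermitian matrix with $(s,t)$ entry $\varphi(\overrightarrow{e_{st}})$ if $v_s\sim v_t$, else $0$; $\mathcal{T}_G$ is the set of all $\mathbb{T}$-gain graphs on $G$. $\Re(A)\ge0$ means the real part of every entry of $A$ is nonnegative. The gain of a directed cycle is the product of gains of its oriented edges. A rooted spanning tree $T$ with root $v_r$ induces the tree order ($v_x\le v_y$ iff $v_x$ is on the $T$-path from $v_r$ to $v_y$); $T$ is normal if adjacent vertices of $G$ are always comparable. The suitably oriented graph $\overrightarrow{G_T}$ orients each edge $e_{st}$ with $v_s\le v_t$ as $\overrightarrow{e_{st}}$ if $e_{st}\in E(T)$ and as $\overrightarrow{e_{ts}}$ otherwise; the $m-n+1$ fundamental cycles $C_j$ of $T$ become directed cycles $\overrightarrow{C_j(T)}$. For $r=(c_1,\dots,c_{m-n+1})\in\mathbb{I}^{m-n+1}$, $\mathcal{A}_T(r)=\{(G,\varphi)\in\mathcal{T}_G:\varphi(\overrightarrow{C_j(T)})=e^{ic_j}\ \forall j\}$. $G$ has property GNRP (w.r.t.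 normal spanning tree $T$) if for each $r$ there is $\Phi\in\mathcal{A}_T(r)$ with $\Re(A(\Phi))\ge0$; $\mathcal{P}$ is the class of connected graphs with GNRP. The sum of subgraphs is the subgraph consisting of all edges in at least one of them. A fundamental subgraph of $G$ w.r.t. $T$ is the sum of a maximal collection of fundamental cycles whose sum intersects $T$ in a subtree. A fundamental subgraph built from fundamental cycles $C_1,\dots,C_s$ has DEP if they can be ordered $C_{k_1},\dots,C_{k_s}$ with $|E(C_{k_i})\setminus E(C_{k_1}+\cdots+C_{k_{i-1}})|>1$ for $i=2,\dots,s$. A connected graph has DEP if every fundamental subgraph with respect to a normal spanning tree $T$ has DEP; $\mathfrak{F}$ is the collection of connected graphs with DEP. *)

theory Defs
  imports Complex_Main
begin

definition simple_graph :: "'a set \<Rightarrow> 'a set set \<Rightarrow> bool" where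
  "simple_graph V E \<longleftrightarrow> finite V \<and>
     (\<forall>e\<in>E. \<exists>x y. x \<noteq> y \<and> x \<in> V \<and> y \<in> V \<and> e = {x, y})"

definition is_path :: "'a set set \<Rightarrow> 'a list \<Rightarrow> bool" where
  "is_path F p \<longleftrightarrow> p \<noteq> [] \<and> distinct p \<and>
     (\<forall>i. i + 1 < length p \<longrightarrow> {p ! i, p ! (i + 1)} \<in> F)"

definition path_edges :: "'a list \<Rightarrow> 'a set set" where
  "path_edges p = {{p ! i, p ! (i + 1)} | i. i + 1 < length p}"

definition connected_on :: "'a set \<Rightarrow> 'a set set \<Rightarrow> bool" where
  "connected_on V F \<longleftrightarrow> V \<noteq> {} \<and>
     (\<forall>x\<in>V. \<forall>y\<in>V. \<exists>p. is_path F p \<and> hd p = x \<and> last p = y \<and> set p \<subseteq> V)"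

definition acyclic_edges :: "'a set set \<Rightarrow> bool" where
  "acyclic_edges F \<longleftrightarrow>
     \<not> (\<exists>p. is_path F p \<and> 3 \<le> length p \<and> {last p, hd p} \<in> F)"

definition spanning_tree :: "'a set \<Rightarrow> 'a set set \<Rightarrow> 'a set set \<Rightarrow> bool" where
  "spanning_tree V E ET \<longleftrightarrow> ET \<subseteq> E \<and> connected_on V ET \<and> acyclic_edges ET"

definition tree_le :: "'a set set \<Rightarrow> 'a \<Rightarrow> 'a \<Rightarrow> 'a \<Rightarrow> bool" where
  "tree_le ET r x y \<longleftrightarrow>
     (\<exists>p. is_path ET p \<and> hd p = r \<and> last p = y \<and> x \<in> set p)"

definition normal_spanning_tree :: "'a set \<Rightarrow> 'a set set \<Rightarrow> 'a set set \<Rightarrow> 'a \<Rightarrow> bool" where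
  "normal_spanning_tree V E ET r \<longleftrightarrow> spanning_tree V E ET \<and> r \<in> V \<and>
     (\<forall>x y. {x, y} \<in> E \<longrightarrow> tree_le ET r x y \<or> tree_le ET r y x)"

definition fund_cycle :: "'a set set \<Rightarrow> 'a set \<Rightarrow> 'a set set" where
  "fund_cycle ET e = (THE C. \<exists>x y p. e = {x, y} \<and> is_path ET p \<and> hd p = x \<and> last p = y
                               \<and> C = insert e (path_edges p))"

definition is_subtree :: "'a set set \<Rightarrow> bool" where
  "is_subtree F \<longleftrightarrow> connected_on (\<Union>F) F \<and> acyclic_edges F"

definition meets_in_subtree :: "'a set set \<Rightarrow> 'a set set \<Rightarrow> 'a set set \<Rightarrow> bool" where
  "meets_in_subtree E ET S \<longleftrightarrow> S \<subseteq> E - ET \<and>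
     is_subtree ((\<Union>e\<in>S. fund_cycle ET e) \<inter> ET)"

text \<open>S indexes a maximal such collection, i.e. the fundamental subgraph
  (\<Union>e\<in>S. fund_cycle ET e).\<close>

definition fundamental_collection :: "'a set set \<Rightarrow> 'a set set \<Rightarrow> 'a set set \<Rightarrow> bool" where
  "fundamental_collection E ET S \<longleftrightarrow> meets_in_subtree E ET S \<and>
     (\<forall>S'. S \<subset> S' \<longrightarrow> \<not> meets_in_subtree E ET S')"

definition DEP_collection :: "'a set set \<Rightarrow> 'a set set \<Rightarrow> bool" where
  "DEP_collection ET S \<longleftrightarrow> (\<exists>ks. distinct ks \<and> set ks = S \<and>
     (\<forall>i. 1 \<le> i \<and> i < length ks \<longrightarrow>
        card (fund_cycle ET (ks ! i) - (\<Union>j<i. fund_cycle ET (ks ! j))) > 1))"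

text \<open>Membership in the class \<open>\<mathfrak>F\<close>.\<close>

definition has_DEP :: "'a set \<Rightarrow> 'a set set \<Rightarrow> bool" where
  "has_DEP V E \<longleftrightarrow> simple_graph V E \<and> connected_on V E \<and>
     (\<forall>ET r S. normal_spanning_tree V E ET r \<and> fundamental_collection E ET S
        \<longrightarrow> DEP_collection ET S)"

definition T_gain :: "'a set set \<Rightarrow> ('a \<Rightarrow> 'a \<Rightarrow> complex) \<Rightarrow> bool" where
  "T_gain E \<phi> \<longleftrightarrow> (\<forall>s t. {s, t} \<in> E \<longrightarrow> cmod (\<phi> s t) = 1 \<and> \<phi> t s = inverse (\<phi> s t))"

definition gain_matrix :: "'a set set \<Rightarrow> ('a \<Rightarrow> 'a \<Rightarrow> complex) \<Rightarrow> 'a \<Rightarrow> 'a \<Rightarrow> complex" where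
  "gain_matrix E \<phi> s t = (if {s, t} \<in> E then \<phi> s t else 0)"

definition re_nonneg :: "'a set \<Rightarrow> 'a set set \<Rightarrow> ('a \<Rightarrow> 'a \<Rightarrow> complex) \<Rightarrow> bool" where
  "re_nonneg V E \<phi> \<longleftrightarrow> (\<forall>s\<in>V. \<forall>t\<in>V. Re (gain_matrix E \<phi> s t) \<ge> 0)"

text \<open>Gain of the directed fundamental cycle of the non-tree edge e in the
  suitably oriented graph: for e = {x,y} with x \<le> y, tree edges are oriented
  downwards along the T-path from x to y and e is oriented from y to x.\<close>

definition fund_cycle_gain ::
  "'a set set \<Rightarrow> 'a \<Rightarrow> ('a \<Rightarrow> 'a \<Rightarrow> complex) \<Rightarrow> 'a set \<Rightarrow> complex" where
  "fund_cycle_gain ET r \<phi> e = (THE g. \<exists>x y p. e = {x, y} \<and> tree_le ET r x y \<and>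
      is_path ET p \<and> hd p = x \<and> last p = y \<and>
      g = (\<Prod>i<length p - 1. \<phi> (p ! i) (p ! (i + 1))) * \<phi> y x)"

text \<open>GNRP with respect to the rooted normal spanning tree (ET, r); the
  parameter r \<in> \<open>\<bbbI>\<close>^(m-n+1) is given as a function c on the non-tree edges.\<close>

definition GNRP_wrt :: "'a set \<Rightarrow> 'a set set \<Rightarrow> 'a set set \<Rightarrow> 'a \<Rightarrow> bool" where
  "GNRP_wrt V E ET r \<longleftrightarrow>
     (\<forall>c :: 'a set \<Rightarrow> real. (\<forall>e\<in>E - ET. 0 \<le> c e \<and> c e < 2 * pi) \<longrightarrow>
        (\<exists>\<phi>. T_gain E \<phi> \<and>
             (\<forall>e\<in>E - ET. fund_cycle_gain ET r \<phi> e = exp (\<i> * complex_of_real (c e))) \<and>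
             re_nonneg V E \<phi>))"

text \<open>Membership in the class \<open>\<P>\<close>.\<close>

definition has_GNRP :: "'a set \<Rightarrow> 'a set set \<Rightarrow> bool" where
  "has_GNRP V E \<longleftrightarrow> simple_graph V E \<and> connected_on V E \<and>
     (\<forall>ET r. normal_spanning_tree V E ET r \<longrightarrow> GNRP_wrt V E ET r)"

definition complete_edges :: "'a set \<Rightarrow> 'a set set" where
  "complete_edges V = {e. \<exists>x\<in>V. \<exists>y\<in>V. x \<noteq> y \<and> e = {x, y}}"

definition K4_V :: "nat set" where "K4_V = {0, 1, 2, 3}"

end

theory Submission
  imports Defs
begin

definition adj :: "'a set set \<Rightarrow> 'a \<Rightarrow> 'a \<Rightarrow> bool" where
  "adj F x y \<longleftrightarrow> {x, y} \<in> F"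

lemma adj_sym: "adj F x y = adj F y x"
  by (simp add: adj_def insert_commute)

lemma adj_sym_fun: "(\<lambda>x y. adj F y x) = adj F"
  by (intro ext) (simp add: adj_sym)

lemma is_path_succ: "is_path F p \<longleftrightarrow> p \<noteq> [] \<and> distinct p \<and> successively (adj F) p"
  unfolding is_path_def successively_conv_nth adj_def by auto

lemma is_path_single[simp]: "is_path F [x]"
  by (simp add: is_path_succ)

lemma is_path_Nil[simp]: "\<not> is_path F []"
  by (simp add: is_path_succ)

lemma is_path_Cons2[simp]: "is_path F (x # y # q) \<longleftrightarrow> {x, y} \<in> F \<and> x \<notin> set (y # q) \<and> is_path F (y # q)"
  by (auto simp: is_path_succ adj_def)

lemma distinct_hd_last: "distinct q \<Longrightarrow> q \<noteq> [] \<Longrightarrow> hd q = last q \<Longrightarrow> q = [hd q]"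
proof (cases q)
  case (Cons x q')
  assume "distinct q" "hd q = last q"
  then show ?thesis using Cons
    by (cases "q' = []") auto
qed simp

lemma path_tail: "is_path F (x # q) \<Longrightarrow> q \<noteq> [] \<Longrightarrow> is_path F q"
  by (cases q) auto

lemma succ_adj_rev: "successively (adj F) (rev xs) = successively (adj F) xs"
proof -
  have "successively (adj F) (rev xs) = successively (\<lambda>x y. adj F y x) xs" by (rule successively_rev)
  then show ?thesis by (subst (asm) adj_sym_fun)
qed

lemma cyc_distinct: "distinct (x # A @ z # B) \<Longrightarrow> distinct (x # C @ z # D) \<Longrightarrow> set A \<inter> set C = {} \<Longrightarrow> distinct (x # A @ z # rev C)"
  by auto

lemma cyc_len: "\<not> 3 \<le> length (x # A @ z # rev C) \<Longrightarrow> A = [] \<and> C = []"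
  by (cases A; cases C) auto

lemma succ_tl: "successively P (x # C @ [z]) \<Longrightarrow> successively P (C @ [z])"
  by (simp add: successively_Cons)

lemma cyc_succ: "successively P (x # A @ [z]) \<Longrightarrow> successively P (z # rev C) \<Longrightarrow> successively P (x # A @ z # rev C)"
proof -
  assume a: "successively P (x # A @ [z])" "successively P (z # rev C)"
  have "x # A @ z # rev C = (x # A @ [z]) @ rev C" by simp
  moreover have "successively P (rev C)" using a(2) by (cases "rev C") auto
  moreover have "rev C \<noteq> [] \<Longrightarrow> P z (hd (rev C))" using a(2) by (cases "rev C") auto
  ultimately show ?thesis using a(1) by (simp only: successively_append_iff) auto
qed

lemma path_unique:
  assumes ac: "acyclic_edges F"
  shows "is_path F p \<Longrightarrow> is_path F q \<Longrightarrow> hd p = hd q \<Longrightarrow> last p = last q \<Longrightarrow> p = q"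
proof (induction p arbitrary: q)
  case Nil then show ?case by simp
next
  case (Cons x p')
  from Cons.prems obtain q' where q: "q = x # q'" by (cases q) auto
  show ?case
  proof (cases "p' = []")
    case True
    then have "hd q = last q" using Cons.prems q by simp
    moreover have "distinct q" "q \<noteq> []" using Cons.prems(2) by (auto simp: is_path_def)
    ultimately have "q = [hd q]" using distinct_hd_last by blast
    then show ?thesis using True q by simp
  next
    case pne: False
    show ?thesis
    proof (cases "q' = []")
      case True
      then have "hd (x # p') = last (x # p')" using Cons.prems q by simp
      moreover have "distinct (x # p')" using Cons.prems(1) by (auto simp: is_path_def)
      ultimately have "x # p' = [hd (x # p')]" using distinct_hd_last by blast
      then show ?thesis using pne by simp
    next
      case qne: False
      have pp: "is_path F p'" by (rule path_tail[OF Cons.prems(1) pne])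
      have qp: "is_path F q'" using path_tail[of F x q'] Cons.prems(2) q qne by simp
      have lasts: "last p' = last q'" using Cons.prems q pne qne by simp
      show ?thesis
      proof (cases "hd p' = hd q'")
        case True then have "p' = q'" using Cons.IH[OF pp qp] lasts by simp
        then show ?thesis using q by simp
      next
        case False
        have "last p' \<in> set p'" "last q' \<in> set q'" using pne qne by simp_all
        then have "\<exists>z\<in>set p'. z \<in> set q'" using lasts by auto
        then obtain A z B where pA: "p' = A @ z # B" "z \<in> set q'" "\<forall>t\<in>set A. t \<notin> set q'"
          using split_list_first_prop[of p' "\<lambda>z. z \<in> set q'"] by blast
        obtain C D where qC: "q' = C @ z # D" using split_list pA(2) by metis
        define L where "L = x # A @ z # rev C"
        have dp: "distinct (x # A @ z # B)" using Cons.prems(1) pA by (simp add: is_path_succ)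
        have dq: "distinct (x # C @ z # D)" using Cons.prems(2) q qC by (simp add: is_path_succ)
        have sp: "successively (adj F) ((x # A @ [z]) @ B)" using Cons.prems(1) pA by (simp add: is_path_succ)
        have sq: "successively (adj F) ((x # C @ [z]) @ D)" using Cons.prems(2) q qC by (simp add: is_path_succ)
        have s1: "successively (adj F) (x # A @ [z])" using sp by (simp only: successively_append_iff)
        have s2a: "successively (adj F) (x # C @ [z])" using sq by (simp only: successively_append_iff)
        have s2: "successively (adj F) (C @ [z])" using s2a by (rule succ_tl)
        have s3: "successively (adj F) (z # rev C)"
          using s2 succ_adj_rev[of F "C @ [z]"] by simp
        have "set C \<subseteq> set q'" using qC by auto
        then have AC: "set A \<inter> set C = {}" using pA(3) by blast
        have dL: "distinct L" unfolding L_def by (rule cyc_distinct[OF dp dq AC])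
        have sL: "successively (adj F) L" unfolding L_def by (rule cyc_succ[OF s1 s3])
        have lenL: "3 \<le> length L"
        proof (rule ccontr)
          assume "\<not> 3 \<le> length L"
          then have "A = [] \<and> C = []" unfolding L_def by (rule cyc_len)
          then show False using False pA qC by simp
        qed
        have lastL: "last L = hd q'"
          using qC by (cases C) (auto simp: L_def)
        have "adj F x (hd q')" using Cons.prems(2) q qne
          by (cases q') (auto simp: is_path_succ)
        then have "{last L, hd L} \<in> F" using lastL by (simp add: L_def adj_def insert_commute)
        moreover have "is_path F L" using dL sL by (simp add: is_path_succ L_def)
        ultimately show ?thesis using ac lenL unfolding acyclic_edges_def by blast
      qed
    qed
  qed
qed

definition okc :: "int \<Rightarrow> int \<Rightarrow> bool" where
  "okc q s \<longleftrightarrow> (q - s) mod 4 = 0 \<or> (q - s) mod 4 = 3"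

lemma fin_cells: "\<forall>q1\<in>{0,1,2,3::int}. \<forall>q2\<in>{0,1,2,3::int}. \<forall>q3\<in>{0,1,2,3::int}.
   \<exists>k1\<in>{-1,0,1::int}. \<exists>k2\<in>{-1,0,1::int}. \<exists>k3\<in>{-1,0,1::int}.
    okc q1 (k1+k2) \<and> okc q2 (k2+k3) \<and> okc q3 (k1+k2+k3)"
  by (simp add: okc_def)

lemma cos_shift_int: "cos (y - of_int m * (2 * pi)) = cos y"
proof -
  have "cos (y - of_int m * (2 * pi)) = cos y * cos ((2*pi) * of_int m) + sin y * sin ((2*pi) * of_int m)"
    by (simp add: cos_diff mult.commute)
  then show ?thesis by simp
qed

lemma cos_okc:
  assumes ok: "okc q s" and lo: "of_int q * (pi/2) \<le> x" and hi: "x \<le> (of_int q + 1) * (pi/2)"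
  shows "0 \<le> cos (x - of_int s * (pi/2))"
proof -
  define t where "t = q - s"
  define m where "m = t div 4"
  define r where "r = t mod 4"
  have tm: "t = 4 * m + r" by (simp add: m_def r_def)
  define y where "y = x - of_int s * (pi/2) - of_int m * (2 * pi)"
  have cy: "cos (x - of_int s * (pi/2)) = cos y" unfolding y_def by (rule cos_shift_int[symmetric])
  have tr: "of_int t = 4 * of_int m + (of_int r :: real)" using tm by simp
  have ylo: "of_int r * (pi/2) \<le> y"
  proof -
    have "of_int q * (pi/2) - of_int s * (pi/2) - of_int m * (2*pi) = of_int r * (pi/2)"
      using tr unfolding t_def by (simp add: algebra_simps)
    then show ?thesis using lo unfolding y_def by linarith
  qed
  have yhi: "y \<le> (of_int r + 1) * (pi/2)"
  proof -
    have "(of_int q + 1) * (pi/2) - of_int s * (pi/2) - of_int m * (2*pi) = (of_int r + 1) * (pi/2)"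
      using tr unfolding t_def by (simp add: algebra_simps)
    then show ?thesis using hi unfolding y_def by linarith
  qed
  have "r = 0 \<or> r = 3" using ok unfolding okc_def r_def t_def by simp
  then show ?thesis
  proof
    assume "r = 0"
    then show ?thesis using ylo yhi cy by (simp add: cos_ge_zero)
  next
    assume r3: "r = 3"
    have "cos y = cos (y - of_int 1 * (2*pi))" by (rule cos_shift_int[symmetric])
    moreover have "0 \<le> cos (y - of_int 1 * (2*pi))"
      using ylo yhi r3 by (intro cos_ge_zero) (simp_all add: algebra_simps)
    ultimately show ?thesis using cy by simp
  qed
qed

lemma cell:
  assumes "0 \<le> c" "c < 2 * pi"
  obtains q :: int where "q \<in> {0,1,2,3}" "of_int q * (pi/2) \<le> c" "c \<le> (of_int q + 1) * (pi/2)"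
proof -
  define q where "q = \<lfloor>c / (pi/2)\<rfloor>"
  have "of_int q \<le> c / (pi/2)" "c / (pi/2) < of_int q + 1" unfolding q_def by linarith+
  then have a: "of_int q * (pi/2) \<le> c" "c < (of_int q + 1) * (pi/2)"
    using pi_gt_zero by (simp_all add: field_simps)
  have "0 < (of_int q + 1) * (pi/2)" using a(2) assms(1) by linarith
  then have "0 < (of_int q + 1 :: real)" using pi_gt_zero by (simp add: zero_less_mult_iff)
  then have "0 \<le> q" by simp
  moreover have "q < 4"
  proof -
    have "of_int q * (pi/2) < 4 * (pi/2)" using a(1) assms(2) by linarith
    then have "(of_int q :: real) < 4" using pi_gt_zero by (simp add: mult_less_cancel_right)
    then show ?thesis by simp
  qed
  ultimately have "q \<in> {0,1,2,3}" by auto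
  then show ?thesis using a by (intro that) auto
qed

lemma angles:
  assumes "0 \<le> c1" "c1 < 2 * pi" "0 \<le> c2" "c2 < 2 * pi" "0 \<le> c3" "c3 < 2 * pi"
  shows "\<exists>k1\<in>{-1,0,1::int}. \<exists>k2\<in>{-1,0,1::int}. \<exists>k3\<in>{-1,0,1::int}.
    0 \<le> cos (c1 - of_int (k1+k2) * (pi/2)) \<and> 0 \<le> cos (c2 - of_int (k2+k3) * (pi/2))
    \<and> 0 \<le> cos (c3 - of_int (k1+k2+k3) * (pi/2))"
proof -
  obtain q1 where q1: "q1 \<in> {0,1,2,3}" "of_int q1 * (pi/2) \<le> c1" "c1 \<le> (of_int q1 + 1) * (pi/2)"
    using cell assms(1,2) by blast
  obtain q2 where q2: "q2 \<in> {0,1,2,3}" "of_int q2 * (pi/2) \<le> c2" "c2 \<le> (of_int q2 + 1) * (pi/2)"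
    using cell assms(3,4) by blast
  obtain q3 where q3: "q3 \<in> {0,1,2,3}" "of_int q3 * (pi/2) \<le> c3" "c3 \<le> (of_int q3 + 1) * (pi/2)"
    using cell assms(5,6) by blast
  have ex: "\<exists>k1\<in>{-1,0,1::int}. \<exists>k2\<in>{-1,0,1::int}. \<exists>k3\<in>{-1,0,1::int}.
    okc q1 (k1+k2) \<and> okc q2 (k2+k3) \<and> okc q3 (k1+k2+k3)"
    by (rule bspec[OF bspec[OF bspec[OF fin_cells q1(1)] q2(1)] q3(1)])
  from ex obtain k1 k2 k3 where
    k: "k1\<in>{-1,0,1}" "k2\<in>{-1,0,1}" "k3\<in>{-1,0,1}"
       "okc q1 (k1+k2)" "okc q2 (k2+k3)" "okc q3 (k1+k2+k3)"
    by (elim bexE conjE) blast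
  show ?thesis
    using k(1-3) cos_okc[OF k(4) q1(2,3)] cos_okc[OF k(5) q2(2,3)] cos_okc[OF k(6) q3(2,3)]
    by (intro bexI[of _ k1] bexI[of _ k2] bexI[of _ k3] conjI)
qed

lemma path_edges_single[simp]: "path_edges [x] = {}"
  by (simp add: path_edges_def)

lemma path_edges_Cons2[simp]: "path_edges (x # y # q) = insert {x, y} (path_edges (y # q))"
proof -
  have "path_edges (x # y # q) = {{(x # y # q) ! i, (x # y # q) ! (i + 1)} | i. i + 1 < length (x # y # q)}"
    by (simp add: path_edges_def)
  also have "\<dots> = insert {x, y} {{(y # q) ! i, (y # q) ! (i + 1)} | i. i + 1 < length (y # q)}"
  proof (intro equalityI subsetI)
    fix e assume "e \<in> {{(x # y # q) ! i, (x # y # q) ! (i + 1)} | i. i + 1 < length (x # y # q)}"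
    then obtain i where i: "e = {(x # y # q) ! i, (x # y # q) ! (i + 1)}" "i + 1 < length (x # y # q)" by blast
    show "e \<in> insert {x, y} {{(y # q) ! i, (y # q) ! (i + 1)} | i. i + 1 < length (y # q)}"
    proof (cases i)
      case 0 then show ?thesis using i by simp
    next
      case (Suc j) then show ?thesis using i by auto
    qed
  next
    fix e assume "e \<in> insert {x, y} {{(y # q) ! i, (y # q) ! (i + 1)} | i. i + 1 < length (y # q)}"
    then show "e \<in> {{(x # y # q) ! i, (x # y # q) ! (i + 1)} | i. i + 1 < length (x # y # q)}"
    proof
      assume "e = {x, y}"
      then show ?thesis by (intro CollectI exI[of _ 0]) simp
    next
      assume "e \<in> {{(y # q) ! i, (y # q) ! (i + 1)} | i. i + 1 < length (y # q)}"
      then obtain i where "e = {(y # q) ! i, (y # q) ! (i + 1)}" "i + 1 < length (y # q)" by blast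
      then show ?thesis by (intro CollectI exI[of _ "Suc i"]) simp
    qed
  qed
  also have "\<dots> = insert {x, y} (path_edges (y # q))" by (simp add: path_edges_def)
  finally show ?thesis .
qed

lemma tree_le_self_root: "tree_le F r x r \<Longrightarrow> x = r"
proof -
  assume "tree_le F r x r"
  then obtain p where p: "is_path F p" "hd p = r" "last p = r" "x \<in> set p" by (auto simp: tree_le_def)
  then have "distinct p" "p \<noteq> []" by (auto simp: is_path_def)
  then have "p = [hd p]" using distinct_hd_last p by metis
  then show ?thesis using p by (metis empty_iff empty_set set_ConsD)
qed

lemma complete_edges_4d:
  assumes "distinct [a, b, c, d]"
  shows "complete_edges {a, b, c, d} = {{a,b},{a,c},{a,d},{b,c},{b,d},{c,d}}"
  using assms unfolding complete_edges_def by (auto simp: insert_commute)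

lemma k4_paths:
  assumes dist: "True"
  shows "is_path {{0,1},{1,2},{2,3::nat}} p \<Longrightarrow> 2 \<le> length p \<Longrightarrow>
    p \<in> set [[0,1],[1,0],[1,2],[2,1],[2,3],[3,2],[0,1,2],[2,1,0],[1,2,3],[3,2,1],[0,1,2,3],[3,2,1,0]]"
proof (induction p)
  case Nil then show ?case by simp
next
  case (Cons x q)
  obtain y q' where q: "q = y # q'" using Cons.prems by (cases q) auto
  show ?case
  proof (cases "q' = []")
    case True
    then show ?thesis using Cons.prems q dist by (auto simp: doubleton_eq_iff)
  next
    case False
    have "is_path {{0,1},{1,2},{2,3::nat}} q" using Cons.prems(1) q by simp
    moreover have "2 \<le> length q" using False q by (cases q') auto
    ultimately have IH: "q \<in> set [[0,1],[1,0],[1,2],[2,1],[2,3],[3,2],[0,1,2],[2,1,0],[1,2,3],[3,2,1],[0,1,2,3],[3,2,1,0]]"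
      by (rule Cons.IH)
    have e: "{x, y} \<in> {{0,1},{1,2},{2,3::nat}}" "x \<notin> set q" using Cons.prems(1) q by auto
    from IH have "q = [0,1] \<or> q = [1,0] \<or> q = [1,2] \<or> q = [2,1] \<or> q = [2,3] \<or> q = [3,2] \<or> q = [0,1,2] \<or> q = [2,1,0] \<or> q = [1,2,3] \<or> q = [3,2,1] \<or> q = [0,1,2,3] \<or> q = [3,2,1,0]" by simp
    then show ?thesis using e q dist by (elim disjE) (auto simp: doubleton_eq_iff)
  qed
qed

lemma k4_acyclic:
  assumes dist: "True"
  shows "acyclic_edges {{0,1},{1,2},{2,3::nat}}"
  unfolding acyclic_edges_def
proof
  assume "\<exists>p. is_path {{0,1},{1,2},{2,3::nat}} p \<and> 3 \<le> length p \<and> {last p, hd p} \<in> {{0,1},{1,2},{2,3::nat}}"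
  then obtain p where p: "is_path {{0,1},{1,2},{2,3::nat}} p" "3 \<le> length p" "{last p, hd p} \<in> {{0,1},{1,2},{2,3::nat}}"
    by blast
  then have "p \<in> set [[0,1],[1,0],[1,2],[2,1],[2,3],[3,2],[0,1,2],[2,1,0],[1,2,3],[3,2,1],[0,1,2,3],[3,2,1,0]]"
    using k4_paths[OF dist] by simp
  then have "p = [0,1] \<or> p = [1,0] \<or> p = [1,2] \<or> p = [2,1] \<or> p = [2,3] \<or> p = [3,2] \<or> p = [0,1,2] \<or> p = [2,1,0] \<or> p = [1,2,3] \<or> p = [3,2,1] \<or> p = [0,1,2,3] \<or> p = [3,2,1,0]" by simp
  then show False using p(2,3) dist by (elim disjE) (auto simp: doubleton_eq_iff)
qed

lemma k4_connected:
  assumes dist: "True"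
  shows "connected_on {0,1,2,3} {{0,1},{1,2},{2,3::nat}}"
  unfolding connected_on_def
proof (intro conjI ballI)
  show "{0, 1, 2, 3} \<noteq> {}" by simp
  fix x y :: nat assume x: "x \<in> {0, 1, 2, 3}" and y: "y \<in> {0, 1, 2, 3}"
  let ?F = "{{0,1},{1,2},{2,3::nat}}"
  show "\<exists>p. is_path ?F p \<and> hd p = x \<and> last p = y \<and> set p \<subseteq> {0, 1, 2, 3}"
    by (rule exI[of _ "if x \<le> y then [x..<Suc y] else rev [y..<Suc x]"])
      (use x y in \<open>elim insertE emptyE; simp add: upt_rec doubleton_eq_iff\<close>)
qed

lemma path_in_V:
  assumes sub: "F \<subseteq> complete_edges V"
  shows "is_path F p \<Longrightarrow> hd p \<in> V \<Longrightarrow> set p \<subseteq> V"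
proof (induction p)
  case Nil then show ?case by simp
next
  case (Cons x q)
  show ?case
  proof (cases "q = []")
    case True then show ?thesis using Cons.prems by simp
  next
    case False
    then obtain y q' where q: "q = y # q'" by (cases q) auto
    have "{x, y} \<in> F" using Cons.prems(1) q by simp
    then have "{x, y} \<in> complete_edges V" using sub by blast
    then have yV: "y \<in> V" unfolding complete_edges_def by (auto simp: doubleton_eq_iff)
    have "is_path F q" using Cons.prems(1) q by simp
    then have "set q \<subseteq> V" using Cons.IH yV q by simp
    then show ?thesis using Cons.prems(2) by simp
  qed
qed

lemma path_prefix:
  assumes a: "is_path F (q1 @ y # q2)"
  shows "is_path F (q1 @ [y])"
proof -
  have s: "successively (adj F) ((q1 @ [y]) @ q2)" "distinct ((q1 @ [y]) @ q2)"
    using a by (simp_all add: is_path_succ)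
  from s(1) have "successively (adj F) (q1 @ [y])" by (simp only: successively_append_iff)
  moreover from s(2) have "distinct (q1 @ [y])" by (simp only: distinct_append)
  ultimately show ?thesis by (simp add: is_path_succ)
qed

lemma fund_cycle_eq:
  assumes ac: "acyclic_edges F" and p: "is_path F p" "hd p = x" "last p = y"
    and p2: "is_path F p2" "hd p2 = y" "last p2 = x" and pe: "path_edges p2 = path_edges p"
  shows "fund_cycle F {x, y} = insert {x, y} (path_edges p)"
  unfolding fund_cycle_def
proof (rule the_equality)
  show "\<exists>x' y' p'. {x, y} = {x', y'} \<and> is_path F p' \<and> hd p' = x' \<and> last p' = y' \<and>
          insert {x, y} (path_edges p) = insert {x, y} (path_edges p')"
    using p by blast
  fix C assume "\<exists>x' y' p'. {x, y} = {x', y'} \<and> is_path F p' \<and> hd p' = x' \<and> last p' = y' \<and>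
          C = insert {x, y} (path_edges p')"
  then obtain x' y' p' where h: "{x, y} = {x', y'}" "is_path F p'" "hd p' = x'" "last p' = y'"
      "C = insert {x, y} (path_edges p')" by blast
  from h(1) have "(x' = x \<and> y' = y) \<or> (x' = y \<and> y' = x)" by (auto simp: doubleton_eq_iff)
  then show "C = insert {x, y} (path_edges p)"
  proof
    assume "x' = x \<and> y' = y"
    then have "p' = p" using path_unique[OF ac h(2) p(1)] h(3,4) p(2,3) by simp
    then show ?thesis using h(5) by simp
  next
    assume "x' = y \<and> y' = x"
    then have "p' = p2" using path_unique[OF ac h(2) p2(1)] h(3,4) p2(2,3) by simp
    then show ?thesis using h(5) pe by simp
  qed
qed

lemma fund_cycle_gain_eq:
  assumes ac: "acyclic_edges F" and le: "tree_le F r x y" and nle: "\<not> tree_le F r y x"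
    and p: "is_path F p" "hd p = x" "last p = y"
  shows "fund_cycle_gain F r \<phi> {x, y} = (\<Prod>i<length p - 1. \<phi> (p ! i) (p ! (i + 1))) * \<phi> y x"
  unfolding fund_cycle_gain_def
proof (rule the_equality)
  show "\<exists>x' y' p'. {x, y} = {x', y'} \<and> tree_le F r x' y' \<and> is_path F p' \<and> hd p' = x' \<and> last p' = y' \<and>
     (\<Prod>i<length p - 1. \<phi> (p ! i) (p ! (i + 1))) * \<phi> y x = (\<Prod>i<length p' - 1. \<phi> (p' ! i) (p' ! (i + 1))) * \<phi> y' x'"
    using p le by blast
  fix g assume "\<exists>x' y' p'. {x, y} = {x', y'} \<and> tree_le F r x' y' \<and> is_path F p' \<and> hd p' = x' \<and> last p' = y' \<and>
     g = (\<Prod>i<length p' - 1. \<phi> (p' ! i) (p' ! (i + 1))) * \<phi> y' x'"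
  then obtain x' y' p' where h: "{x, y} = {x', y'}" "tree_le F r x' y'" "is_path F p'" "hd p' = x'" "last p' = y'"
      "g = (\<Prod>i<length p' - 1. \<phi> (p' ! i) (p' ! (i + 1))) * \<phi> y' x'" by blast
  from h(1) have "(x' = x \<and> y' = y) \<or> (x' = y \<and> y' = x)" by (auto simp: doubleton_eq_iff)
  then show "g = (\<Prod>i<length p - 1. \<phi> (p ! i) (p ! (i + 1))) * \<phi> y x"
  proof
    assume xy: "x' = x \<and> y' = y"
    then have "p' = p" using path_unique[OF ac h(3) p(1)] h(4,5) p(2,3) by simp
    then show ?thesis using h(6) xy by simp
  next
    assume "x' = y \<and> y' = x"
    then show ?thesis using h(2) nle by simp
  qed
qed

lemma classify:
  assumes nst: "normal_spanning_tree V (complete_edges V) ET r" and finV: "finite V" and cardV: "card V = 4"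
  shows "\<exists>b c d. distinct [r, b, c, d] \<and> V = {r, b, c, d} \<and> ET = {{r, b}, {b, c}, {c, d}}"
proof -
  have sub: "ET \<subseteq> complete_edges V" and ac: "acyclic_edges ET" and rV: "r \<in> V"
    and comp: "\<forall>x y. {x, y} \<in> complete_edges V \<longrightarrow> tree_le ET r x y \<or> tree_le ET r y x"
    using nst unfolding normal_spanning_tree_def spanning_tree_def by auto
  define P where "P n \<longleftrightarrow> (\<exists>p. is_path ET p \<and> hd p = r \<and> length p = n)" for n
  have P1: "P 1" unfolding P_def by (intro exI[of _ "[r]"]) simp
  have bnd: "\<forall>n. P n \<longrightarrow> n \<le> 4"
  proof (intro allI impI)
    fix n assume "P n"
    then obtain p where p: "is_path ET p" "hd p = r" "length p = n" unfolding P_def by blast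
    have "set p \<subseteq> V" using path_in_V[OF sub p(1)] p(2) rV by simp
    then have "card (set p) \<le> 4" using card_mono[OF finV] cardV by metis
    moreover have "distinct p" using p(1) by (simp add: is_path_def)
    then have "length p = card (set p)" by (simp add: distinct_card)
    ultimately show "n \<le> 4" using p(3) by simp
  qed
  obtain n where n: "P n" "\<forall>m. P m \<longrightarrow> m \<le> n" using Nat.ex_has_greatest_nat[OF P1 bnd] by blast
  obtain p where p: "is_path ET p" "hd p = r" "length p = n" using n(1) unfolding P_def by blast
  have pV: "set p \<subseteq> V" using path_in_V[OF sub p(1)] p(2) rV by simp
  have pne: "p \<noteq> []" using p(1) by (simp add: is_path_def)
  define y where "y = last p"
  have yp: "y \<in> set p" using pne y_def by simp
  have Vp: "V \<subseteq> set p"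
  proof
    fix v assume v: "v \<in> V"
    show "v \<in> set p"
    proof (rule ccontr)
      assume nv: "v \<notin> set p"
      have vy: "v \<noteq> y" using nv yp by blast
      have yV: "y \<in> V" using pV yp by blast
      have "{v, y} \<in> complete_edges V" unfolding complete_edges_def using v yV vy by blast
      then have "tree_le ET r v y \<or> tree_le ET r y v" using comp by blast
      then show False
      proof
        assume "tree_le ET r v y"
        then obtain q where q: "is_path ET q" "hd q = r" "last q = y" "v \<in> set q"
          unfolding tree_le_def by blast
        have "q = p" using path_unique[OF ac q(1) p(1)] q(2,3) p(2) y_def by simp
        then show False using q(4) nv by simp
      next
        assume "tree_le ET r y v"
        then obtain q where q: "is_path ET q" "hd q = r" "last q = v" "y \<in> set q"
          unfolding tree_le_def by blast
        obtain q1 q2 where qs: "q = q1 @ y # q2" using split_list[OF q(4)] by blast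
        have pre: "is_path ET (q1 @ [y])" using q(1) qs path_prefix by metis
        have "hd (q1 @ [y]) = r" using q(2) qs by (cases q1) auto
        then have "q1 @ [y] = p" using path_unique[OF ac pre p(1)] p(2) y_def by simp
        moreover have "q2 \<noteq> []" using q(3) qs vy by auto
        ultimately have "length q > n" using qs p(3) by auto
        moreover have "P (length q)" unfolding P_def using q by blast
        ultimately show False using n(2) by fastforce
      qed
    qed
  qed
  have setp: "set p = V" using pV Vp by blast
  have dp: "distinct p" using p(1) by (simp add: is_path_def)
  have "length p = 4" using distinct_card[OF dp] setp cardV by simp
  then obtain w b c d where pw: "p = [w, b, c, d]"
    by (auto simp: length_Suc_conv numeral_eq_Suc)
  have wr: "w = r" using p(2) pw by simp
  have dist: "distinct [r, b, c, d]" using dp pw wr by simp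
  have Veq: "V = {r, b, c, d}" using setp pw wr by auto
  have pth: "is_path ET [r, b, c, d]" using p(1) pw wr by simp
  then have e1: "{r, b} \<in> ET" and e2: "{b, c} \<in> ET" and e3: "{c, d} \<in> ET" by auto
  have n1: "{r, c} \<notin> ET"
  proof
    assume a: "{r, c} \<in> ET"
    have "is_path ET [r, b, c] \<and> 3 \<le> length [r, b, c] \<and> {last [r, b, c], hd [r, b, c]} \<in> ET"
      using a e1 e2 e3 dist by (simp add: insert_commute)
    then show False using ac unfolding acyclic_edges_def by blast
  qed
  have n2: "{b, d} \<notin> ET"
  proof
    assume a: "{b, d} \<in> ET"
    have "is_path ET [b, c, d] \<and> 3 \<le> length [b, c, d] \<and> {last [b, c, d], hd [b, c, d]} \<in> ET"
      using a e1 e2 e3 dist by (simp add: insert_commute)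
    then show False using ac unfolding acyclic_edges_def by blast
  qed
  have n3: "{r, d} \<notin> ET"
  proof
    assume a: "{r, d} \<in> ET"
    have "is_path ET [r, b, c, d] \<and> 3 \<le> length [r, b, c, d] \<and> {last [r, b, c, d], hd [r, b, c, d]} \<in> ET"
      using a e1 e2 e3 dist by (simp add: insert_commute)
    then show False using ac unfolding acyclic_edges_def by blast
  qed
  have "ET \<subseteq> {{r, b}, {b, c}, {c, d}}"
  proof
    fix e assume e: "e \<in> ET"
    then have "e \<in> complete_edges {r, b, c, d}" using sub Veq by auto
    then have "e \<in> {{r,b},{r,c},{r,d},{b,c},{b,d},{c,d}}" using complete_edges_4d[OF dist] by simp
    then show "e \<in> {{r, b}, {b, c}, {c, d}}" using n1 n2 n3 e by auto
  qed
  then have "ET = {{r, b}, {b, c}, {c, d}}" using e1 e2 e3 by auto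
  then show ?thesis using dist Veq by blast
qed

lemma cos_quarter: "k \<in> {-1,0,1::int} \<Longrightarrow> 0 \<le> cos (of_int k * (pi/2))"
  by (auto intro: cos_ge_zero)

lemma prod3: "(\<Prod>i<length [x, y, z] - 1. f ([x, y, z] ! i) ([x, y, z] ! (i + 1))) = f x y * f y z"
  by (simp add: numeral_2_eq_2)

lemma prod4: "(\<Prod>i<length [x, y, z, w] - 1. f ([x, y, z, w] ! i) ([x, y, z, w] ! (i + 1))) = f x y * f y z * f z w"
  by (simp add: numeral_3_eq_3 mult.assoc)

lemma gnrp_ptree:
  assumes dist: "distinct [a, b, c, d]" and ac: "acyclic_edges {{a, b}, {b, c}, {c, d}}"
  shows "GNRP_wrt {a, b, c, d} (complete_edges {a, b, c, d}) {{a, b}, {b, c}, {c, d}} a"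
proof -
  let ?ET = "{{a, b}, {b, c}, {c, d}}"
  let ?V = "{a, b, c, d}"
  let ?E = "complete_edges ?V"
  have E: "?E = {{a,b},{a,c},{a,d},{b,c},{b,d},{c,d}}" by (rule complete_edges_4d[OF dist])
  have pabc: "is_path ?ET [a, b, c]" using dist by simp
  have pbcd: "is_path ?ET [b, c, d]" using dist by simp
  have pabcd: "is_path ?ET [a, b, c, d]" using dist by simp
  have pab: "is_path ?ET [a, b]" using dist by simp
  have le1: "tree_le ?ET a a c" unfolding tree_le_def using pabc by (intro exI[of _ "[a, b, c]"]) simp
  have le2: "tree_le ?ET a b d" unfolding tree_le_def using pabcd by (intro exI[of _ "[a, b, c, d]"]) simp
  have le3: "tree_le ?ET a a d" unfolding tree_le_def using pabcd by (intro exI[of _ "[a, b, c, d]"]) simp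
  have nle1: "\<not> tree_le ?ET a c a" using tree_le_self_root dist by force
  have nle3: "\<not> tree_le ?ET a d a" using tree_le_self_root dist by force
  have nle2: "\<not> tree_le ?ET a d b"
  proof
    assume "tree_le ?ET a d b"
    then obtain q where q: "is_path ?ET q" "hd q = a" "last q = b" "d \<in> set q" unfolding tree_le_def by blast
    have "q = [a, b]" using path_unique[OF ac q(1) pab] q(2,3) by simp
    then show False using q(4) dist by auto
  qed
  have ED: "e \<in> ?E - ?ET \<Longrightarrow> e = {a, c} \<or> e = {b, d} \<or> e = {a, d}" for e
    using E by auto
  have ac_in: "{a, c} \<in> ?E - ?ET" using E dist by (auto simp: doubleton_eq_iff)
  have bd_in: "{b, d} \<in> ?E - ?ET" using E dist by (auto simp: doubleton_eq_iff)
  have ad_in: "{a, d} \<in> ?E - ?ET" using E dist by (auto simp: doubleton_eq_iff)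
  have g1: "fund_cycle_gain ?ET a \<phi> {a, c} = \<phi> a b * \<phi> b c * \<phi> c a" for \<phi>
    using fund_cycle_gain_eq[OF ac le1 nle1 pabc, of \<phi>] by (simp only: prod3) simp
  have g2: "fund_cycle_gain ?ET a \<phi> {b, d} = \<phi> b c * \<phi> c d * \<phi> d b" for \<phi>
    using fund_cycle_gain_eq[OF ac le2 nle2 pbcd, of \<phi>] by (simp only: prod3) simp
  have g3: "fund_cycle_gain ?ET a \<phi> {a, d} = \<phi> a b * \<phi> b c * \<phi> c d * \<phi> d a" for \<phi>
    using fund_cycle_gain_eq[OF ac le3 nle3 pabcd, of \<phi>] by (simp only: prod4) simp
  show ?thesis
    unfolding GNRP_wrt_def
  proof (intro allI impI)
    fix cc :: "'a set \<Rightarrow> real"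
    assume rng: "\<forall>e\<in>?E - ?ET. 0 \<le> cc e \<and> cc e < 2 * pi"
    define c1 where "c1 = cc {a, c}"
    define c2 where "c2 = cc {b, d}"
    define c3 where "c3 = cc {a, d}"
    have r1: "0 \<le> c1" "c1 < 2 * pi" using rng ac_in unfolding c1_def by auto
    have r2: "0 \<le> c2" "c2 < 2 * pi" using rng bd_in unfolding c2_def by auto
    have r3: "0 \<le> c3" "c3 < 2 * pi" using rng ad_in unfolding c3_def by auto
    obtain k1 k2 k3 where k: "k1 \<in> {-1,0,1}" "k2 \<in> {-1,0,1}" "k3 \<in> {-1,0,1}"
      "0 \<le> cos (c1 - of_int (k1+k2) * (pi/2))" "0 \<le> cos (c2 - of_int (k2+k3) * (pi/2))"
      "0 \<le> cos (c3 - of_int (k1+k2+k3) * (pi/2))"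
      using angles[OF r1 r2 r3] by blast
    define \<alpha> where "\<alpha> = of_int k1 * (pi/2)"
    define \<beta> where "\<beta> = of_int k2 * (pi/2)"
    define \<gamma> where "\<gamma> = of_int k3 * (pi/2)"
    define \<delta> where "\<delta> = c1 - \<alpha> - \<beta>"
    define \<epsilon> where "\<epsilon> = c2 - \<beta> - \<gamma>"
    define \<zeta> where "\<zeta> = c3 - \<alpha> - \<beta> - \<gamma>"
    have ca: "0 \<le> cos \<alpha>" "0 \<le> cos \<beta>" "0 \<le> cos \<gamma>"
      using k(1-3) cos_quarter unfolding \<alpha>_def \<beta>_def \<gamma>_def by auto
    have cd: "0 \<le> cos \<delta>" "0 \<le> cos \<epsilon>" "0 \<le> cos \<zeta>"
    proof -
      have "\<delta> = c1 - of_int (k1+k2) * (pi/2)" unfolding \<delta>_def \<alpha>_def \<beta>_def by (simp add: algebra_simps)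
      then show "0 \<le> cos \<delta>" using k(4) by simp
      have "\<epsilon> = c2 - of_int (k2+k3) * (pi/2)" unfolding \<epsilon>_def \<gamma>_def \<beta>_def by (simp add: algebra_simps)
      then show "0 \<le> cos \<epsilon>" using k(5) by simp
      have "\<zeta> = c3 - of_int (k1+k2+k3) * (pi/2)" unfolding \<zeta>_def \<alpha>_def \<beta>_def \<gamma>_def by (simp add: algebra_simps)
      then show "0 \<le> cos \<zeta>" using k(6) by simp
    qed
    define \<theta> :: "'a \<Rightarrow> 'a \<Rightarrow> real" where
      "\<theta> s t = (if s = a \<and> t = b then \<alpha> else if s = b \<and> t = a then - \<alpha>
        else if s = b \<and> t = c then \<beta> else if s = c \<and> t = b then - \<beta>
        else if s = c \<and> t = d then \<gamma> else if s = d \<and> t = c then - \<gamma>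
        else if s = c \<and> t = a then \<delta> else if s = a \<and> t = c then - \<delta>
        else if s = d \<and> t = b then \<epsilon> else if s = b \<and> t = d then - \<epsilon>
        else if s = d \<and> t = a then \<zeta> else if s = a \<and> t = d then - \<zeta> else 0)" for s t
    define \<phi> where "\<phi> s t = cis (\<theta> s t)" for s t
    have th: "\<theta> a b = \<alpha>" "\<theta> b a = - \<alpha>" "\<theta> b c = \<beta>" "\<theta> c b = - \<beta>"
      "\<theta> c d = \<gamma>" "\<theta> d c = - \<gamma>" "\<theta> c a = \<delta>" "\<theta> a c = - \<delta>"
      "\<theta> d b = \<epsilon>" "\<theta> b d = - \<epsilon>" "\<theta> d a = \<zeta>" "\<theta> a d = - \<zeta>"
      using dist unfolding \<theta>_def by auto
    have cos_th: "0 \<le> cos (\<theta> s t)" for s t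
      unfolding \<theta>_def using ca cd by (simp split: if_split)
    show "\<exists>\<phi>. T_gain ?E \<phi> \<and> (\<forall>e\<in>?E - ?ET. fund_cycle_gain ?ET a \<phi> e = exp (\<i> * complex_of_real (cc e))) \<and>
              re_nonneg ?V ?E \<phi>"
    proof (intro exI conjI)
      show "T_gain ?E \<phi>"
        unfolding T_gain_def
      proof (intro allI impI conjI)
        fix s t assume st: "{s, t} \<in> ?E"
        show "cmod (\<phi> s t) = 1" unfolding \<phi>_def by simp
        have "\<theta> t s = - \<theta> s t" using st unfolding E using th by (auto simp: doubleton_eq_iff)
        then show "\<phi> t s = inverse (\<phi> s t)" unfolding \<phi>_def by simp
      qed
      show "\<forall>e\<in>?E - ?ET. fund_cycle_gain ?ET a \<phi> e = exp (\<i> * complex_of_real (cc e))"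
      proof
        fix e assume e: "e \<in> ?E - ?ET"
        have "fund_cycle_gain ?ET a \<phi> {a, c} = exp (\<i> * complex_of_real c1)"
          unfolding g1 \<phi>_def th cis_mult cis_conv_exp[symmetric] \<delta>_def by simp
        moreover have "fund_cycle_gain ?ET a \<phi> {b, d} = exp (\<i> * complex_of_real c2)"
          unfolding g2 \<phi>_def th cis_mult cis_conv_exp[symmetric] \<epsilon>_def by simp
        moreover have "fund_cycle_gain ?ET a \<phi> {a, d} = exp (\<i> * complex_of_real c3)"
          unfolding g3 \<phi>_def th cis_mult cis_conv_exp[symmetric] \<zeta>_def by simp
        ultimately show "fund_cycle_gain ?ET a \<phi> e = exp (\<i> * complex_of_real (cc e))"
          using ED[OF e] unfolding c1_def c2_def c3_def by auto
      qed
      show "re_nonneg ?V ?E \<phi>"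
        unfolding re_nonneg_def gain_matrix_def \<phi>_def using cos_th by simp
    qed
  qed
qed

lemma card_Un_Diff2: "finite A \<Longrightarrow> finite B \<Longrightarrow> card (A \<union> B) = card A + card (B - A)"
proof -
  assume f: "finite A" "finite B"
  have "A \<union> B = A \<union> (B - A)" by auto
  moreover have "A \<inter> (B - A) = {}" by auto
  ultimately show ?thesis using f card_Un_disjoint[of A "B - A"] by simp
qed

lemma K4_eq: "K4_V = {0, 1, 2, 3}" by (simp add: K4_V_def)

lemma K4_E: "complete_edges K4_V = {{0,1},{0,2},{0,3},{1,2},{1,3},{2,3::nat}}"
  unfolding K4_eq by (rule complete_edges_4d) simp

lemma K4_tree_le: "x \<in> K4_V \<Longrightarrow> y \<in> K4_V \<Longrightarrow> x \<le> y \<Longrightarrow> tree_le {{0,1},{1,2},{2,3::nat}} 0 x y"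
  unfolding tree_le_def K4_eq
  by (rule exI[of _ "[0..<Suc y]"]) (elim insertE emptyE; simp add: upt_rec doubleton_eq_iff)

lemma K4_nst: "normal_spanning_tree K4_V (complete_edges K4_V) {{0,1},{1,2},{2,3::nat}} 0"
  unfolding normal_spanning_tree_def spanning_tree_def
proof (intro conjI allI impI)
  show "{{0,1},{1,2},{2,3::nat}} \<subseteq> complete_edges K4_V" unfolding K4_E by auto
  show "connected_on K4_V {{0,1},{1,2},{2,3::nat}}" unfolding K4_eq by (rule k4_connected) simp
  show "acyclic_edges {{0,1},{1,2},{2,3::nat}}" by (rule k4_acyclic) simp
  show "(0::nat) \<in> K4_V" by (simp add: K4_V_def)
  fix x y :: nat assume "{x, y} \<in> complete_edges K4_V"
  then have "x \<in> K4_V" "y \<in> K4_V" unfolding complete_edges_def by (auto simp: doubleton_eq_iff)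
  then show "tree_le {{0,1},{1,2},{2,3}} 0 x y \<or> tree_le {{0,1},{1,2},{2,3}} 0 y x"
    using K4_tree_le by (cases "x \<le> y") auto
qed

lemma K4_fc:
  "fund_cycle {{0,1},{1,2},{2,3::nat}} {0,2} = {{0,2},{0,1},{1,2}}"
  "fund_cycle {{0,1},{1,2},{2,3::nat}} {1,3} = {{1,3},{1,2},{2,3}}"
  "fund_cycle {{0,1},{1,2},{2,3::nat}} {0,3} = {{0,3},{0,1},{1,2},{2,3}}"
proof -
  have ac: "acyclic_edges {{0,1},{1,2},{2,3::nat}}" by (rule k4_acyclic) simp
  show "fund_cycle {{0,1},{1,2},{2,3::nat}} {0,2} = {{0,2},{0,1},{1,2}}"
    by (subst fund_cycle_eq[OF ac, of "[0,1,2]" _ _ "[2,1,0]"]) (simp_all add: insert_commute doubleton_eq_iff)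
  show "fund_cycle {{0,1},{1,2},{2,3::nat}} {1,3} = {{1,3},{1,2},{2,3}}"
    by (subst fund_cycle_eq[OF ac, of "[1,2,3]" _ _ "[3,2,1]"]) (simp_all add: insert_commute doubleton_eq_iff)
  show "fund_cycle {{0,1},{1,2},{2,3::nat}} {0,3} = {{0,3},{0,1},{1,2},{2,3}}"
    by (subst fund_cycle_eq[OF ac, of "[0,1,2,3]" _ _ "[3,2,1,0]"]) (simp_all add: insert_commute doubleton_eq_iff)
qed

lemma K4_fcS:
  "fund_cycle {{0,1},{1,2},{2,3::nat}} {0,2} \<subseteq> {{0,1},{0,2},{0,3},{1,2},{1,3},{2,3::nat}} \<and> 3 \<le> card (fund_cycle {{0,1},{1,2},{2,3::nat}} {0,2}) \<and> finite (fund_cycle {{0,1},{1,2},{2,3::nat}} {0,2})"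
  "fund_cycle {{0,1},{1,2},{2,3::nat}} {1,3} \<subseteq> {{0,1},{0,2},{0,3},{1,2},{1,3},{2,3::nat}} \<and> 3 \<le> card (fund_cycle {{0,1},{1,2},{2,3::nat}} {1,3}) \<and> finite (fund_cycle {{0,1},{1,2},{2,3::nat}} {1,3})"
  "fund_cycle {{0,1},{1,2},{2,3::nat}} {0,3} \<subseteq> {{0,1},{0,2},{0,3},{1,2},{1,3},{2,3::nat}} \<and> 3 \<le> card (fund_cycle {{0,1},{1,2},{2,3::nat}} {0,3}) \<and> finite (fund_cycle {{0,1},{1,2},{2,3::nat}} {0,3})"
  unfolding K4_fc by (simp_all add: doubleton_eq_iff)

lemma K4_notDEP: "\<not> DEP_collection {{0,1},{1,2},{2,3::nat}} {{0,2},{1,3},{0,3}}"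
proof
  let ?ET = "{{0,1},{1,2},{2,3::nat}}"
  let ?S = "{{0,2},{1,3},{0,3::nat}}"
  let ?f = "fund_cycle ?ET"
  let ?E = "{{0,1},{0,2},{0,3},{1,2},{1,3},{2,3::nat}}"
  assume "DEP_collection ?ET ?S"
  then have "\<exists>ks. distinct ks \<and> set ks = ?S \<and>
    (\<forall>i. 1 \<le> i \<and> i < length ks \<longrightarrow> card (?f (ks ! i) - (\<Union>j<i. ?f (ks ! j))) > 1)"
    unfolding DEP_collection_def .
  then obtain ks where ksa: "distinct ks \<and> set ks = ?S \<and>
    (\<forall>i. 1 \<le> i \<and> i < length ks \<longrightarrow> card (?f (ks ! i) - (\<Union>j<i. ?f (ks ! j))) > 1)"
    by (rule exE)
  note ks = conjunct1[OF ksa] conjunct1[OF conjunct2[OF ksa]] conjunct2[OF conjunct2[OF ksa]]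
  have cS: "card ?S = 3" by (simp add: doubleton_eq_iff)
  have len: "length ks = 3" using distinct_card[OF ks(1)] ks(2) cS by simp
  have fS: "?f e \<subseteq> ?E \<and> 3 \<le> card (?f e) \<and> finite (?f e)" if "e \<in> ?S" for e
    using that K4_fcS by (elim insertE emptyE) simp_all
  have "ks ! 0 \<in> set ks" "ks ! 1 \<in> set ks" "ks ! 2 \<in> set ks"
    by (rule nth_mem, simp add: len)+
  then have m: "ks ! 0 \<in> ?S" "ks ! 1 \<in> ?S" "ks ! 2 \<in> ?S" by (simp_all only: ks(2))
  define A where "A = ?f (ks ! 0)"
  define B where "B = ?f (ks ! 1)"
  define C where "C = ?f (ks ! 2)"
  have u1: "(\<Union>j<(1::nat). ?f (ks ! j)) = A" unfolding A_def by auto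
  have u2: "(\<Union>j<(2::nat). ?f (ks ! j)) = A \<union> B" unfolding A_def B_def
    by (auto simp: less_Suc_eq numeral_2_eq_2)
  have cB: "card (B - A) \<ge> 2" using ks(3)[rule_format, of 1] len u1 unfolding B_def by simp
  have cC: "card (C - (A \<union> B)) \<ge> 2" using ks(3)[rule_format, of 2] len u2 unfolding C_def by simp
  have fA: "finite A" "3 \<le> card A" "A \<subseteq> ?E" using fS[OF m(1)] unfolding A_def by auto
  have fB: "finite B" "B \<subseteq> ?E" using fS[OF m(2)] unfolding B_def by auto
  have fC: "finite C" "C \<subseteq> ?E" using fS[OF m(3)] unfolding C_def by auto
  have "card (A \<union> B \<union> C) = card A + card (B - A) + card (C - (A \<union> B))"
    using card_Un_Diff2[of A B] card_Un_Diff2[of "A \<union> B" C] fA fB fC by simp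
  then have "card (A \<union> B \<union> C) \<ge> 7" using fA cB cC by simp
  moreover have "card (A \<union> B \<union> C) \<le> card ?E"
    using fA fB fC by (intro card_mono) auto
  moreover have "card ?E = 6" by (simp add: doubleton_eq_iff)
  ultimately show False by simp
qed

lemma K4_not_has_DEP: "\<not> has_DEP K4_V (complete_edges K4_V)"
proof
  let ?ET = "{{0,1},{1,2},{2,3::nat}}"
  let ?S = "{{0,2},{1,3},{0,3::nat}}"
  let ?E = "complete_edges K4_V"
  assume h: "has_DEP K4_V ?E"
  have ED: "?E - ?ET = ?S" unfolding K4_E by (auto simp: doubleton_eq_iff)
  have U0: "(\<Union>e\<in>?S. fund_cycle ?ET e) = {{0,2},{0,1},{1,2}} \<union> {{1,3},{1,2},{2,3}} \<union> {{0,3},{0,1},{1,2},{2,3::nat}}"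
    by (simp only: UN_insert UN_empty K4_fc) simp
  have U: "(\<Union>e\<in>?S. fund_cycle ?ET e) \<inter> ?ET = ?ET" unfolding U0 by auto
  have sub: "is_subtree ?ET"
    unfolding is_subtree_def
  proof
    have "\<Union>?ET = {0,1,2,3}" by auto
    then show "connected_on (\<Union>?ET) ?ET" using k4_connected by simp
    show "acyclic_edges ?ET" by (rule k4_acyclic) simp
  qed
  have "fundamental_collection ?E ?ET ?S"
    unfolding fundamental_collection_def meets_in_subtree_def
  proof (intro conjI allI impI)
    show "?S \<subseteq> ?E - ?ET" using ED by simp
    show "is_subtree ((\<Union>e\<in>?S. fund_cycle ?ET e) \<inter> ?ET)" using U sub by simp
    fix S' assume "?S \<subset> S'"
    then show "\<not> (S' \<subseteq> ?E - ?ET \<and> is_subtree ((\<Union>e\<in>S'. fund_cycle ?ET e) \<inter> ?ET))"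
      using ED by auto
  qed
  then have "DEP_collection ?ET ?S" using h K4_nst unfolding has_DEP_def by blast
  then show False using K4_notDEP by blast
qed

lemma K4_has_GNRP: "has_GNRP K4_V (complete_edges K4_V)"
  unfolding has_GNRP_def
proof (intro conjI allI impI)
  have "finite K4_V" by (simp add: K4_V_def)
  moreover have "\<forall>e\<in>complete_edges K4_V. \<exists>x y. x \<noteq> y \<and> x \<in> K4_V \<and> y \<in> K4_V \<and> e = {x, y}"
    unfolding complete_edges_def by blast
  ultimately show "simple_graph K4_V (complete_edges K4_V)"
    unfolding simple_graph_def by blast
  show "connected_on K4_V (complete_edges K4_V)"
    unfolding connected_on_def
  proof (intro conjI ballI)
    show "K4_V \<noteq> {}" by (simp add: K4_V_def)
    fix x y assume x: "x \<in> K4_V" and y: "y \<in> K4_V"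
    show "\<exists>p. is_path (complete_edges K4_V) p \<and> hd p = x \<and> last p = y \<and> set p \<subseteq> K4_V"
    proof (cases "x = y")
      case True then show ?thesis using x by (intro exI[of _ "[x]"]) simp
    next
      case False
      have "{x, y} \<in> complete_edges K4_V" unfolding complete_edges_def using x y False by blast
      then show ?thesis using x y False by (intro exI[of _ "[x, y]"]) simp
    qed
  qed
  fix ET r assume nst: "normal_spanning_tree K4_V (complete_edges K4_V) ET r"
  have ac: "acyclic_edges ET" using nst unfolding normal_spanning_tree_def spanning_tree_def by blast
  have "finite K4_V" "card K4_V = 4" by (simp_all add: K4_V_def)
  then obtain b c d where bcd: "distinct [r, b, c, d]" "K4_V = {r, b, c, d}" "ET = {{r, b}, {b, c}, {c, d}}"
    using classify[OF nst] by blast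
  show "GNRP_wrt K4_V (complete_edges K4_V) ET r"
    unfolding bcd(2,3) using gnrp_ptree[OF bcd(1)] ac bcd(3) by simp
qed

theorem theorem4p3:
  shows "\<not> has_DEP K4_V (complete_edges K4_V) \<and> has_GNRP K4_V (complete_edges K4_V)"
  using K4_not_has_DEP K4_has_GNRP by blast

end
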